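(* The map $G$ has sensitive dependence on initial conditions on $(\mathcal{X},d)$, with a constant of sensitivity at least $2^{\mathsf{N}-1}$: there is $\delta\ge 2^{\mathsf{N}-1}$ such that for every $x\in\mathcal{X}$ and every neighborhood $V$ of $x$ there exist $y\in V$ and $n\ge0$ with $d(G^n(x),G^n(y))>\delta$.
   Context: Fix an integer $\mathsf{N}\ge 1$ and write $\llbracket a;b\rrbracket=\{a,a+1,\dots,b\}$. Let $f:\mathbb{Z}/4\mathbb{Z}\to\mathbb{Z}/4\mathbb{Z}$, $f(x)=x+1 \pmod 4$, with $f^{-1}(x)=x-1\pmod 4$ and $f^0=\mathrm{id}$. Let $\mathrm{sign}(x)=1$ if $x>0$, $0$ if $x=0$, $-1$ if $x<0$. For $k\in\llbracket -\mathsf{N};\mathsf{N}\rrbracket$ define $f_k:(\mathbb{Z}/4\mathbb{Z})^{\mathsf{N}}\to(\mathbb{Z}/4\mathbb{Z})^{\mathsf{N}}$ by $f_k(C_1,\dots,C_{\mathsf{N}})=(C_1,\dots,C_{|k|-1},f^{\mathrm{sign}(k)}(C_{|k|}),\dots,f^{\mathrm{sign}(k)}(C_{\mathsf{N}}))$ (so $f_0$ is the identity). Folding sequences are $F=(F^j)_{j\in\mathbb{N}}\in\llbracket -\mathsf{N};\mathsf{N}\rrbracket^{\mathbb{N}}$; let $i(F)=F^0$ and let $\sigma$ be the shift, $\sigma((F^j)_{j})=(F^{j+1})_{j}$. A finite sequence $(k_1,\dots,k_n)$ is identified with $(k_1,\dots,k_n,0,0,\dots)$. On $\check{\mathcal{X}}=(\mathbb{Z}/4\mathbb{Z})^{\mathsf{N}}\times\llbracket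 -\mathsf{N};\mathsf{N}\rrbracket^{\mathbb{N}}$ define $G((C,F))=(f_{i(F)}(C),\sigma(F))$. SAW requirement: for $C\in(\mathbb{Z}/4\mathbb{Z})^{\mathsf{N}}$ let $p(C)=(X_0,\dots,X_{\mathsf{N}})\in(\mathbb{Z}^2)^{\mathsf{N}+1}$ with $X_0=(0,0)$ and $X_i=X_{i-1}+v(C_i)$, where $v(0)=(1,0)$, $v(1)=(0,-1)$, $v(2)=(-1,0)$, $v(3)=(0,1)$. $C$ satisfies the SAW requirement iff the points $X_0,\dots,X_{\mathsf{N}}$ are pairwise distinct. Let $\mathfrak{C}_{\mathsf{N}}$ be the set of $C\in(\mathbb{Z}/4\mathbb{Z})^{\mathsf{N}}$ for which there exist $n\ge1$ and $k_1,\dots,k_n\in\llbracket -\mathsf{N};\mathsf{N}\rrbracket$ such that $C$ is the first component of $G^n(((0,\dots,0),(k_1,\dots,k_n)))$ and, for every $i\le n$, the first component of $G^i(((0,\dots,0),(k_1,\dots,k_n)))$ satisfies the SAW requirement. Let $\mathcal{X}=\mathfrak{C}_{\mathsf{N}}\times\llbracket -\mathsf{N};\mathsf{N}\rrbracket^{\mathbb{N}}$ with metric $d((C,F),(\check C,\check F))=d_C(C,\check C)+d_F(F,\check F)$, where $d_C(C,\check C)=\sum_{k=1}^{\mathsf{N}}\delta(C_k,\check C_k)2^{\mathsf{N}-k}$ ($\delta(a,b)=0$ if $a=b$, $1$ otherwise) and $d_F(F,\check F)=\frac{9}{2\mathsf{N}}\sum_{k=0}^{\infty}\frac{|F^k-\check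 F^k|}{10^{k+1}}$. The paper regards $G$ as a self-map of $\mathcal{X}$. *)

theory Defs
  imports Complex_Main
begin

text \<open>Configurations \<open>C \<in> (Z/4Z)^N\<close> are lists of naturals of length N with entries < 4;
  entry \<open>C_k\<close> (1-based) is \<open>C ! (k-1)\<close>.\<close>

definition fmap :: "int \<Rightarrow> nat list \<Rightarrow> nat list" where
  "fmap k C = map (\<lambda>i. if k \<noteq> 0 \<and> nat \<bar>k\<bar> \<le> i + 1
                        then (C ! i + (if k > 0 then 1 else 3)) mod 4 else C ! i)
                  [0..<length C]"

definition Gmap :: "nat list \<times> (nat \<Rightarrow> int) \<Rightarrow> nat list \<times> (nat \<Rightarrow> int)" where
  "Gmap x = (fmap (snd x 0) (fst x), (\<lambda>j. snd x (Suc j)))"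

definition fold_seq :: "int list \<Rightarrow> (nat \<Rightarrow> int)" where
  "fold_seq ks = (\<lambda>j. if j < length ks then ks ! j else 0)"

definition vstep :: "nat \<Rightarrow> int \<times> int" where
  "vstep c = (if c = 0 then (1, 0) else if c = 1 then (0, -1)
              else if c = 2 then (-1, 0) else (0, 1))"

definition path_pt :: "nat list \<Rightarrow> nat \<Rightarrow> int \<times> int" where
  "path_pt C i = ((\<Sum>j<i. fst (vstep (C ! j))), (\<Sum>j<i. snd (vstep (C ! j))))"

definition saw :: "nat list \<Rightarrow> bool" where
  "saw C \<longleftrightarrow> distinct (map (path_pt C) [0..<length C + 1])"

definition CN :: "nat \<Rightarrow> nat list set" where
  "CN N = {C. \<exists>ks. length ks \<ge> 1 \<and> set ks \<subseteq> {- int N..int N} \<and>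
              C = fst ((Gmap ^^ length ks) (replicate N 0, fold_seq ks)) \<and>
              (\<forall>i\<in>{1..length ks}. saw (fst ((Gmap ^^ i) (replicate N 0, fold_seq ks))))}"

definition XN :: "nat \<Rightarrow> (nat list \<times> (nat \<Rightarrow> int)) set" where
  "XN N = {(C, F). C \<in> CN N \<and> (\<forall>j. F j \<in> {- int N..int N})}"

definition dC :: "nat \<Rightarrow> nat list \<Rightarrow> nat list \<Rightarrow> real" where
  "dC N C C' = (\<Sum>k=1..N. (if C ! (k - 1) = C' ! (k - 1) then 0 else 1) * 2 ^ (N - k))"

definition dF :: "nat \<Rightarrow> (nat \<Rightarrow> int) \<Rightarrow> (nat \<Rightarrow> int) \<Rightarrow> real" where
  "dF N F F' = 9 / (2 * real N) * (\<Sum>k. real_of_int \<bar>F k - F' k\<bar> / 10 ^ (k + 1))"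

definition dX :: "nat \<Rightarrow> nat list \<times> (nat \<Rightarrow> int) \<Rightarrow> nat list \<times> (nat \<Rightarrow> int) \<Rightarrow> real" where
  "dX N x y = dC N (fst x) (fst y) + dF N (snd x) (snd y)"

definition is_nbhd :: "nat \<Rightarrow> (nat list \<times> (nat \<Rightarrow> int)) set \<Rightarrow> nat list \<times> (nat \<Rightarrow> int) \<Rightarrow> bool" where
  "is_nbhd N V x \<longleftrightarrow> (\<exists>\<epsilon>>0. {y \<in> XN N. dX N x y < \<epsilon>} \<subseteq> V)"

end

theory Submission
  imports Defs
begin

lemma length_fmap[simp]: "length (fmap k C) = length C"
  by (simp add: fmap_def)

lemma nth_fmap: "i < length C \<Longrightarrow> fmap k C ! i =
   (if k \<noteq> 0 \<and> nat \<bar>k\<bar> \<le> i + 1 then (C ! i + (if k > 0 then 1 else 3)) mod 4 else C ! i)"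
  by (simp add: fmap_def)

lemma snd_Gpow: "snd ((Gmap ^^ n) x) = (\<lambda>j. snd x (j + n))"
  by (induction n) (auto simp: Gmap_def)

lemma fst_Gpow_Suc: "fst ((Gmap ^^ Suc n) x) = fmap (snd x n) (fst ((Gmap ^^ n) x))"
  by (simp add: Gmap_def snd_Gpow)

lemma fst_Gpow_Suc': "fst (Gmap ((Gmap ^^ n) x)) = fmap (snd x n) (fst ((Gmap ^^ n) x))"
  using fst_Gpow_Suc by simp

lemma len_Gpow: "length (fst ((Gmap ^^ n) x)) = length (fst x)"
  by (induction n) (auto simp: fst_Gpow_Suc')

lemma fst_Gpow_cong: "(\<forall>j<n. F j = F' j) \<Longrightarrow> fst ((Gmap ^^ n) (C, F)) = fst ((Gmap ^^ n) (C, F'))"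
  by (induction n) (auto simp: fst_Gpow_Suc')

lemma CN_len: "C \<in> CN N \<Longrightarrow> length C = N"
  unfolding CN_def using len_Gpow by auto

lemma dF_summable:
  assumes "\<And>k. real_of_int \<bar>F k - F' k\<bar> \<le> B"
  shows "summable (\<lambda>k. real_of_int \<bar>F k - F' k\<bar> / 10 ^ (k + 1))"
proof (rule summable_comparison_test[where g = "\<lambda>k. B * (1/10) ^ (k+1)"])
  show "\<exists>M. \<forall>n\<ge>M. norm (real_of_int \<bar>F n - F' n\<bar> / 10 ^ (n + 1)) \<le> B * (1 / 10) ^ (n + 1)"
    using assms by (auto simp: power_one_over divide_right_mono)
  show "summable (\<lambda>k. B * (1/10::real) ^ (k+1))"
    by (intro summable_mult summable_ignore_initial_segment[where k=1, simplified]) auto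
qed

lemma set_fmap: "set C \<subseteq> {..<4} \<Longrightarrow> set (fmap k C) \<subseteq> {..<4}"
  unfolding fmap_def using nth_mem by fastforce

lemma set_Gpow: "set (fst x) \<subseteq> {..<4} \<Longrightarrow> set (fst ((Gmap ^^ n) x)) \<subseteq> {..<4}"
proof (induction n)
  case (Suc n)
  then show ?case using set_fmap by (simp only: funpow.simps comp_def fst_Gpow_Suc')
qed simp

lemma CN_set: "C \<in> CN N \<Longrightarrow> set C \<subseteq> {..<4}"
  unfolding CN_def using set_Gpow[of "(replicate N 0, _)"] by fastforce

lemma first_differ:
  assumes "(d::nat) < 4" "k' = (if k = 1 then -1 else 1)"
  shows "(if k \<noteq> 0 \<and> nat \<bar>k\<bar> \<le> 1 then (d + (if k > 0 then 1 else 3)) mod 4 else d) \<noteq>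
         (if k' \<noteq> 0 \<and> nat \<bar>k'\<bar> \<le> 1 then (d + (if k' > 0 then 1 else 3)) mod 4 else d)"
proof -
  have "k = 1 \<or> k = -1 \<or> \<not>(k \<noteq> 0 \<and> nat \<bar>k\<bar> \<le> 1)" by auto
  moreover have "(d + 1) mod 4 \<noteq> (d + 3) mod 4" by presburger
  moreover have "d \<noteq> (d + 1) mod 4" using assms(1) by presburger
  ultimately show ?thesis using assms(2) by auto
qed

theorem mainTheorem6:
  fixes N :: nat
  assumes "N \<ge> 1"
  shows "\<exists>\<delta>::real. \<delta> \<ge> 2 ^ (N - 1) \<and>
           (\<forall>x\<in>XN N. \<forall>V. is_nbhd N V x \<longrightarrow>
              (\<exists>y\<in>V \<inter> XN N. \<exists>n::nat. dX N ((Gmap ^^ n) x) ((Gmap ^^ n) y) > \<delta>))"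
proof (intro exI conjI ballI allI impI)
  show "(2::real) ^ (N - 1) \<ge> 2 ^ (N - 1)" by simp
  fix x V assume xX: "x \<in> XN N" and nb: "is_nbhd N V x"
  obtain C F where x: "x = (C, F)" by (cases x)
  have CC: "C \<in> CN N" and Fr: "\<And>j. F j \<in> {- int N..int N}" using xX x by (auto simp: XN_def)
  obtain \<epsilon> where ep: "\<epsilon> > 0" and sub: "{y \<in> XN N. dX N x y < \<epsilon>} \<subseteq> V"
    using nb by (auto simp: is_nbhd_def)
  obtain m where m: "(1/5::real) ^ m < \<epsilon> / 9"
    using real_arch_pow_inv[of "\<epsilon>/9" "1/5"] ep by auto
  define g :: "int \<Rightarrow> int" where "g k = (if k = 1 then -1 else 1)" for k
  define F' where "F' j = (if j < m then F j else g (F j))" for j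
  define y where "y = (C, F')"
  have Nr: "real N \<ge> 1" using assms by simp
  have F'r: "F' j \<in> {- int N..int N}" for j using Fr[of j] assms by (auto simp: F'_def g_def)
  have yX: "y \<in> XN N" using CC F'r by (auto simp: XN_def y_def)
  have bnd: "real_of_int \<bar>F k - F' k\<bar> \<le> 2 * real N" for k
  proof -
    have "\<bar>F k - F' k\<bar> \<le> 2 * int N" using Fr[of k] F'r[of k] by auto
    then show ?thesis by (metis of_int_le_iff of_int_mult of_int_of_nat_eq of_int_numeral)
  qed
  have summ: "summable (\<lambda>k. real_of_int \<bar>F k - F' k\<bar> / 10 ^ (k + 1))"
    by (rule dF_summable[OF bnd])
  define c where "c = 2 * real N * (1/5) ^ m"
  have cs: "(\<lambda>k. c / 2 * (1/2::real) ^ k) sums (c / 2 * 2)"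
    using sums_mult[OF geometric_sums[of "1/2::real"], of "c/2"] by simp
  have termb: "real_of_int \<bar>F k - F' k\<bar> / 10 ^ (k + 1) \<le> c / 2 * (1/2::real) ^ k" for k
  proof (cases "k < m")
    case True then show ?thesis by (simp add: F'_def c_def)
  next
    case False
    have "(5::real) ^ m \<le> 5 ^ (k+1)" using False by (intro power_increasing) auto
    then have "(5::real) ^ m * 2 ^ (k+1) \<le> 10 ^ (k+1)"
    proof -
      have "(10::real) ^ (k+1) = 5 ^ (k+1) * 2 ^ (k+1)" by (simp flip: power_mult_distrib)
      then show ?thesis using \<open>(5::real) ^ m \<le> 5 ^ (k+1)\<close> by (simp add: mult_right_mono)
    qed
    then have "1 / (10::real) ^ (k+1) \<le> 1 / (5 ^ m * 2 ^ (k+1))"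
      by (intro divide_left_mono) auto
    also have "\<dots> = (1/5) ^ m * (1/2) * (1/2) ^ k" by (simp add: power_one_over)
    finally have h: "1 / (10::real) ^ (k+1) \<le> (1/5) ^ m * (1/2) * (1/2) ^ k" .
    have "real_of_int \<bar>F k - F' k\<bar> / 10 ^ (k + 1) = real_of_int \<bar>F k - F' k\<bar> * (1 / 10 ^ (k + 1))" by simp
    also have "\<dots> \<le> (2 * real N) * ((1/5) ^ m * (1/2) * (1/2) ^ k)"
      by (intro mult_mono bnd h) auto
    also have "\<dots> = c / 2 * (1/2::real) ^ k" by (simp add: c_def)
    finally show ?thesis .
  qed
  have "(\<Sum>k. real_of_int \<bar>F k - F' k\<bar> / 10 ^ (k + 1)) \<le> c"
    using suminf_le[OF termb summ sums_summable[OF cs]] sums_unique[OF cs] by simp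
  then have "dF N F F' \<le> 9 / (2 * real N) * c"
    unfolding dF_def using Nr by (intro mult_left_mono) auto
  also have "\<dots> = 9 * (1/5) ^ m" using Nr by (simp add: c_def)
  also have "\<dots> < \<epsilon>" using m by simp
  finally have "dX N x y < \<epsilon>" by (simp add: dX_def x y_def dC_def)
  then have yV: "y \<in> V \<inter> XN N" using sub yX by auto
  show "\<exists>y\<in>V \<inter> XN N. \<exists>n. 2 ^ (N - 1) < dX N ((Gmap ^^ n) x) ((Gmap ^^ n) y)"
  proof (intro bexI[OF _ yV] exI[where x="Suc m"])
    define D where "D = fst ((Gmap ^^ m) (C, F))"
    have D': "fst ((Gmap ^^ m) (C, F')) = D" unfolding D_def
      by (rule fst_Gpow_cong[symmetric]) (auto simp: F'_def)
    have lenD: "length D = N" using CN_len[OF CC] len_Gpow unfolding D_def by (metis fst_conv)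
    have setD: "set D \<subseteq> {..<4}" using CN_set[OF CC] set_Gpow unfolding D_def by (metis fst_conv)
    have D0: "D ! 0 < 4" proof -
      have "D ! 0 \<in> set D" using lenD assms by (intro nth_mem) simp
      then show ?thesis using setD by auto
    qed
    have gx: "fst ((Gmap ^^ Suc m) x) = fmap (F m) D" by (simp only: fst_Gpow_Suc x D_def snd_conv fst_conv)
    have gy: "fst ((Gmap ^^ Suc m) y) = fmap (g (F m)) D"
      by (simp only: fst_Gpow_Suc y_def D' snd_conv fst_conv) (simp add: F'_def)
    have diff: "fmap (F m) D ! 0 \<noteq> fmap (g (F m)) D ! 0"
    proof -
      have lt: "0 < length D" using lenD assms by simp
      show ?thesis unfolding nth_fmap[OF lt] using first_differ[OF D0 g_def[of "F m"]] by simp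
    qed
    have "dC N (fmap (F m) D) (fmap (g (F m)) D) \<ge>
         (if fmap (F m) D ! (1 - 1) = fmap (g (F m)) D ! (1 - 1) then 0 else 1) * 2 ^ (N - 1)"
      unfolding dC_def by (rule member_le_sum) (use assms in auto)
    then have dCb: "dC N (fmap (F m) D) (fmap (g (F m)) D) \<ge> 2 ^ (N - 1)" using diff by simp
    have sx: "snd ((Gmap ^^ Suc m) x) = (\<lambda>j. F (j + Suc m))" unfolding snd_Gpow x by simp
    have sy: "snd ((Gmap ^^ Suc m) y) = (\<lambda>j. F' (j + Suc m))" unfolding snd_Gpow y_def by simp
    have gne: "g k \<noteq> k" for k by (auto simp: g_def)
    have "0 < (\<Sum>k. real_of_int \<bar>F (k + Suc m) - F' (k + Suc m)\<bar> / 10 ^ (k + 1))"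
    proof (rule suminf_pos2[where i=0])
      show "summable (\<lambda>k. real_of_int \<bar>F (k + Suc m) - F' (k + Suc m)\<bar> / 10 ^ (k + 1))"
        by (rule dF_summable[OF bnd])
      show "0 < real_of_int \<bar>F (0 + Suc m) - F' (0 + Suc m)\<bar> / 10 ^ (0 + 1)"
        using gne[of "F (Suc m)"] by (auto simp: F'_def)
    qed auto
    then have "dF N (\<lambda>j. F (j + Suc m)) (\<lambda>j. F' (j + Suc m)) > 0"
      unfolding dF_def using Nr by (intro mult_pos_pos) auto
    then show "2 ^ (N - 1) < dX N ((Gmap ^^ Suc m) x) ((Gmap ^^ Suc m) y)"
      unfolding dX_def gx gy sx sy using dCb by linarith
  qed
qed

end
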